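(* Let $\langle B,\wedge,{}'\rangle$ be an algebra with $\wedge$ binary and ${}'$ unary satisfying $x\wedge(y\wedge z)\approx z\wedge(y\wedge x)$, $x''\approx x$, and $x'\approx (x\wedge y)'\wedge(x\wedge y')'$. Then $x\wedge y=y\wedge x$ for all $x,y\in B$. *)

theory Defs
  imports Main
begin

end

theory Submission
  imports Defs
begin

theorem corollary7p7:
  fixes B :: "'a set" and meet :: "'a \<Rightarrow> 'a \<Rightarrow> 'a" and c :: "'a \<Rightarrow> 'a"
  assumes closed_meet: "\<And>x y. x \<in> B \<Longrightarrow> y \<in> B \<Longrightarrow> meet x y \<in> B"
    and closed_c: "\<And>x. x \<in> B \<Longrightarrow> c x \<in> B"
    and ax1: "\<And>x y z. x \<in> B \<Longrightarrow> y \<in> B \<Longrightarrow> z \<in> B \<Longrightarrow>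
               meet x (meet y z) = meet z (meet y x)"
    and ax2: "\<And>x. x \<in> B \<Longrightarrow> c (c x) = x"
    and ax3: "\<And>x y. x \<in> B \<Longrightarrow> y \<in> B \<Longrightarrow>
               c x = meet (c (meet x y)) (c (meet x (c y)))"
  shows "\<forall>x\<in>B. \<forall>y\<in>B. meet x y = meet y x"
proof -
  note cl = closed_meet closed_c
  have s14: "meet (c (meet x (c y))) (c (meet x y)) = c x" if h: "x \<in> B" "y \<in> B" for x y
    using ax3[of x "c y"] ax2[of y] h cl by simp
  have s6: "meet (c (meet x (c y))) (meet (c (meet x y)) z) = meet z (c x)"
    if h: "x \<in> B" "y \<in> B" "z \<in> B" for x y z
    using ax1[of "c (meet x (c y))" "c (meet x y)" z] ax3[of x y] h cl by simp
  have s6b: "meet (c (meet x y)) (meet (c (meet x (c y))) z) = meet z (c x)"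
    if h: "x \<in> B" "y \<in> B" "z \<in> B" for x y z
    using ax1[of "c (meet x y)" "c (meet x (c y))" z] s14[of x y] h cl by simp
  have s8: "meet (meet (c (meet x y)) z) (c x) = meet (c x) (meet z (c (meet x y)))"
    if h: "x \<in> B" "y \<in> B" "z \<in> B" for x y z
  proof -
    have "meet (c x) (meet z (c (meet x y))) = meet (c (meet x y)) (meet z (c x))"
      using ax1[of "c x" z "c (meet x y)"] h cl by simp
    also have "\<dots> = meet (c (meet x y)) (meet (c (meet x (c y))) (meet (c (meet x y)) z))"
      using s6[of x y z] h by simp
    also have "\<dots> = meet (meet (c (meet x y)) z) (c x)"
      using s6b[of x y "meet (c (meet x y)) z"] h cl by simp
    finally show ?thesis by simp
  qed
  have s9: "meet (c (meet (c x) (meet y (c (meet y x))))) y = meet y x"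
    if h: "x \<in> B" "y \<in> B" for x y
  proof -
    have "meet y x = c (c (meet y x))" using ax2 h cl by simp
    also have "\<dots> = meet (c (meet (c (meet y x)) (meet y (c x)))) (c (meet (c (meet y x)) (c (meet y (c x)))))"
      using ax3[of "c (meet y x)" "meet y (c x)"] h cl by simp
    also have "c (meet (c (meet y x)) (c (meet y (c x)))) = y"
      using ax3[of y x] ax2[of y] h cl by simp
    also have "meet (c (meet y x)) (meet y (c x)) = meet (c x) (meet y (c (meet y x)))"
      using ax1[of "c (meet y x)" y "c x"] h cl by simp
    finally show ?thesis by simp
  qed
  have s10: "meet x (c (meet (c y) (meet x (c (meet x y))))) = meet x y"
    if h: "x \<in> B" "y \<in> B" for x y
  proof -
    have "meet x y = c (c (meet x y))" using ax2 h cl by simp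
    also have "\<dots> = meet (c (meet (c (meet x y)) (c (meet x (c y))))) (c (meet (c (meet x y)) (meet x (c y))))"
      using s14[of "c (meet x y)" "meet x (c y)"] h cl by simp
    also have "c (meet (c (meet x y)) (c (meet x (c y)))) = x"
      using ax3[of x y] ax2[of x] h cl by simp
    also have "meet (c (meet x y)) (meet x (c y)) = meet (c y) (meet x (c (meet x y)))"
      using ax1[of "c (meet x y)" x "c y"] h cl by simp
    finally show ?thesis by simp
  qed
  have s11: "meet (meet y x) x = meet x (meet y x)" if h: "x \<in> B" "y \<in> B" for x y
    using s8[of "c x" "meet y (c (meet y x))" y] s9[of x y] ax2[of x] s10[of y x] h cl by simp
  have s13: "meet (meet x y) (meet y z) = meet y (meet (meet x y) z)"
    if h: "x \<in> B" "y \<in> B" "z \<in> B" for x y z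
    using ax1[of "meet x y" y z] s11[of y x] ax1[of z "meet x y" y] h cl by simp
  have s15: "meet (c (meet x y)) (meet (c x) z) = meet (c x) (meet (c (meet x y)) z)"
    if h: "x \<in> B" "y \<in> B" "z \<in> B" for x y z
    using s13[of "c (meet x (c y))" "c (meet x y)" z] s14[of x y] h cl by simp
  have s16: "meet (meet y x) y = meet y (meet y x)" if h: "x \<in> B" "y \<in> B" for x y
    using s11[of y "c (meet (c x) (meet y (c (meet y x))))"] s9[of x y] h cl by simp
  have s17: "meet (c x) (meet y (c x)) = meet (c x) (meet (c x) y)"
    if h: "x \<in> B" "y \<in> B" for x y
  proof -
    have "meet (c x) (meet y (c x)) = meet (c x) (meet (c (meet x (c y))) (meet (c (meet x y)) y))"
      using s6[of x y y] h by simp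
    also have "\<dots> = meet (c (meet x (c y))) (meet (c x) (meet (c (meet x y)) y))"
      using s15[of x "c y" "meet (c (meet x y)) y"] ax2[of y] h cl by simp
    also have "\<dots> = meet (c (meet x (c y))) (meet (c (meet x y)) (meet (c x) y))"
      using s15[of x y y] h cl by simp
    also have "\<dots> = meet (meet (c x) y) (c x)"
      using s6[of x y "meet (c x) y"] h cl by simp
    also have "\<dots> = meet (c x) (meet (c x) y)"
      using s16[of y "c x"] h cl by simp
    finally show ?thesis .
  qed
  have s18: "meet x (meet y x) = meet x (meet x y)" if h: "x \<in> B" "y \<in> B" for x y
    using s17[of "c x" y] ax2[of x] h cl by simp
  have s19: "meet (meet x (c (meet y z))) (c y) = meet (c y) (meet x (c (meet y z)))"
    if h: "x \<in> B" "y \<in> B" "z \<in> B" for x y z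
  proof -
    have "meet (meet x (c (meet y z))) (c y) = meet (c (meet y (c z))) (meet (c (meet y z)) (meet x (c (meet y z))))"
      using s6[of y z "meet x (c (meet y z))"] h cl by simp
    also have "\<dots> = meet (c (meet y (c z))) (meet (c (meet y z)) (meet (c (meet y z)) x))"
      using s18[of "c (meet y z)" x] h cl by simp
    also have "\<dots> = meet (meet (c (meet y z)) x) (c y)"
      using s6[of y z "meet (c (meet y z)) x"] h cl by simp
    also have "\<dots> = meet (c y) (meet x (c (meet y z)))"
      using s8[of y z x] h by simp
    finally show ?thesis .
  qed
  have s20: "meet (c (meet x (c (meet y z)))) (c (meet z (meet y x))) = c x"
    if h: "x \<in> B" "y \<in> B" "z \<in> B" for x y z
    using s14[of x "meet y z"] ax1[of x y z] h cl by simp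
  have s21: "meet (c x) (c z) = meet (c z) (c x)" if h: "x \<in> B" "z \<in> B" for x z
    using s19[of "c (meet x (c (meet z z)))" z "meet z x"] s20[of x z z] h cl by simp
  have s23: "meet x (c y) = meet (c y) x" if h: "x \<in> B" "y \<in> B" for x y
    using s21[of "c x" y] ax2[of x] h cl by simp
  show ?thesis using s23 ax2 cl by metis
qed

end
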